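(* Let $q\ge3$, $G\in\mathbb G^q$, $S=\Psi(G)$ with core $C$. Let $w$ be a white vertex of $S$ that belongs to $C$ and is not a chain-vertex of $C$. If at least one core-chain of $C$ incident to $w$ contains at least one internal white vertex, then $w$ is admissible.
   Context: Fix an integer $q\ge 2$. A $(q+1)$-edge-colored graph (colored graph) is a finite connected graph, multiple edges allowed and no loops, whose edges carry colors in $\{0,1,\dots,q\}$ such that every vertex is incident to exactly one edge of each color. It is rooted if one color-0 edge is distinguished and oriented; it is bipartite if its vertices can be colored black and white so that every edge joins a black and a white vertex, with the convention that the origin of the root edge is black. $\mathbb G^q$ denotes the set of rooted bipartite colored graphs. Constellations: given $G\in\mathbb G^q$, its constellation $S=\Psi(G)$ is obtained as follows: orient every edge from its black to its white endpoint; contract every color-0 edge into a single vertex, called a white vertex of $S$ (the one coming from the root edge is the root vertex). For each $i\in\{1,\dots,q\}$ the color-$i$ edges now form directed cycles; for each such cycle, passing through white vertices $w_1,\dots,w_p$ in this cyclic order, add a new vertex of color $i$ joined by one color-$i$ edge to each $w_k$, equip the new vertex with the cyclic order $(w_1,\dots,w_p)$ of its incident edges, and delete the original color-$i$ edges of the cycle. Core: the core $C$ of $S$ is obtained by repeatedly deleting a vertex of degree $1$ other than the root vertex, together with its incident edge, until every non-root vertex has degree at least 2; a vertex of $S$ belongs to $C$ if it is not deleted. A chain-vertex of $C$ is a non-root vertex of degree $2$ in $C$; a core-chain is a path of $C$ (possibly closed) whose internal vertices are chain-vertices and whose extremities are not chain-vertices. A white vertex $w$ of $S=\Psi(G)$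 is admissible if the two endpoints of the color-0 edge of $G$ contracted to $w$ are joined in $G$ by a path containing no color-0 edge. *)

theory Defs
  imports Main
begin

text \<open>A rooted bipartite (q+1)-edge-colored graph: vertex set, edge set, incidence
(each edge has a set of exactly two endpoints, so no loops, multiple edges allowed),
edge colors, the distinguished root edge, the origin of its orientation, and the
set of black vertices of the bipartition.\<close>

record ('v, 'e) rbgraph =
  gV :: "'v set"
  gE :: "'e set"
  ginc :: "'e \<Rightarrow> 'v set"
  gcol :: "'e \<Rightarrow> nat"
  groot :: 'e
  gorig :: 'v
  gblack :: "'v set"

definition g_adj :: "('v, 'e) rbgraph \<Rightarrow> ('v \<times> 'v) set" where
  "g_adj G = {(x, y). \<exists>e\<in>gE G. ginc G e = {x, y}}"

definition colored_graph :: "nat \<Rightarrow> ('v, 'e) rbgraph \<Rightarrow> bool" where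
  "colored_graph q G \<longleftrightarrow>
     finite (gV G) \<and> finite (gE G) \<and> gV G \<noteq> {} \<and>
     (\<forall>e\<in>gE G. ginc G e \<subseteq> gV G \<and> card (ginc G e) = 2 \<and> gcol G e \<le> q) \<and>
     (\<forall>v\<in>gV G. \<forall>i\<le>q. \<exists>!e. e \<in> gE G \<and> v \<in> ginc G e \<and> gcol G e = i) \<and>
     (\<forall>u\<in>gV G. \<forall>v\<in>gV G. (u, v) \<in> (g_adj G)\<^sup>*)"

definition in_Gq :: "nat \<Rightarrow> ('v, 'e) rbgraph \<Rightarrow> bool" where
  "in_Gq q G \<longleftrightarrow>
     colored_graph q G \<and>
     groot G \<in> gE G \<and> gcol G (groot G) = 0 \<and> gorig G \<in> ginc G (groot G) \<and>
     gblack G \<subseteq> gV G \<and> (\<forall>e\<in>gE G. card (ginc G e \<inter> gblack G) = 1) \<and>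
     gorig G \<in> gblack G"

definition blackend :: "('v, 'e) rbgraph \<Rightarrow> 'e \<Rightarrow> 'v" where
  "blackend G e = (THE x. x \<in> ginc G e \<and> x \<in> gblack G)"

definition whiteend :: "('v, 'e) rbgraph \<Rightarrow> 'e \<Rightarrow> 'v" where
  "whiteend G e = (THE x. x \<in> ginc G e \<and> x \<notin> gblack G)"

definition edge_at :: "('v, 'e) rbgraph \<Rightarrow> 'v \<Rightarrow> nat \<Rightarrow> 'e" where
  "edge_at G v i = (THE e. e \<in> gE G \<and> v \<in> ginc G e \<and> gcol G e = i)"

text \<open>Color-0 edges = vertices obtained by contracting color-0 edges.\<close>
definition zero_edges :: "('v, 'e) rbgraph \<Rightarrow> 'e set" where
  "zero_edges G = {e \<in> gE G. gcol G e = 0}"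

text \<open>After contracting color-0 edges, the color-i edge leaving (black to white) the
contracted vertex e goes to the contracted vertex of its white endpoint.\<close>
definition carc :: "('v, 'e) rbgraph \<Rightarrow> nat \<Rightarrow> ('e \<times> 'e) set" where
  "carc G i = {(e, edge_at G (whiteend G (edge_at G (blackend G e) i)) 0) | e. e \<in> zero_edges G}"

text \<open>The (set of white vertices on the) directed color-i cycle through e.\<close>
definition ccycle :: "('v, 'e) rbgraph \<Rightarrow> nat \<Rightarrow> 'e \<Rightarrow> 'e set" where
  "ccycle G i e = {e'. (e, e') \<in> (carc G i)\<^sup>*}"

datatype 'e cvert = WV 'e | CV nat "'e set"

text \<open>Vertices of the constellation: white vertices and one vertex of color i per
color-i cycle (identified by color and set of white vertices on the cycle).\<close>
definition const_verts :: "nat \<Rightarrow> ('v, 'e) rbgraph \<Rightarrow> 'e cvert set" where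
  "const_verts q G = WV ` zero_edges G \<union>
     {CV i (ccycle G i e) | i e. 1 \<le> i \<and> i \<le> q \<and> e \<in> zero_edges G}"

text \<open>Adjacency of the constellation: a white vertex is joined to the color-i vertex
of the cycle it lies on (one edge; the constellation is a simple graph).\<close>
definition const_adj :: "nat \<Rightarrow> ('v, 'e) rbgraph \<Rightarrow> 'e cvert \<Rightarrow> 'e cvert \<Rightarrow> bool" where
  "const_adj q G x y \<longleftrightarrow>
     (\<exists>e i. e \<in> zero_edges G \<and> 1 \<le> i \<and> i \<le> q \<and>
        ((x = WV e \<and> y = CV i (ccycle G i e)) \<or> (y = WV e \<and> x = CV i (ccycle G i e))))"

definition const_root :: "('v, 'e) rbgraph \<Rightarrow> 'e cvert" where
  "const_root G = WV (groot G)"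

definition prune_step :: "('a \<Rightarrow> 'a \<Rightarrow> bool) \<Rightarrow> 'a \<Rightarrow> ('a set \<times> 'a set) set" where
  "prune_step adj rt = {(R, R - {v}) | R v. v \<in> R \<and> v \<noteq> rt \<and> card {u \<in> R. adj v u} = 1}"

text \<open>C is (the vertex set of) a core: result of repeatedly deleting non-root degree-1
vertices until every non-root vertex has degree at least 2.  The core graph is the
subgraph induced on C.\<close>
definition is_core :: "'a set \<Rightarrow> ('a \<Rightarrow> 'a \<Rightarrow> bool) \<Rightarrow> 'a \<Rightarrow> 'a set \<Rightarrow> bool" where
  "is_core V adj rt C \<longleftrightarrow>
     (V, C) \<in> (prune_step adj rt)\<^sup>* \<and> (\<forall>v\<in>C. v \<noteq> rt \<longrightarrow> card {u \<in> C. adj v u} \<ge> 2)"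

definition chain_vertex :: "('a \<Rightarrow> 'a \<Rightarrow> bool) \<Rightarrow> 'a \<Rightarrow> 'a set \<Rightarrow> 'a \<Rightarrow> bool" where
  "chain_vertex adj rt C v \<longleftrightarrow> v \<in> C \<and> v \<noteq> rt \<and> card {u \<in> C. adj v u} = 2"

text \<open>A core-chain, as the list of its vertices (a path of C, possibly closed:
first = last allowed; no edge repeated).\<close>
definition core_chain :: "('a \<Rightarrow> 'a \<Rightarrow> bool) \<Rightarrow> 'a \<Rightarrow> 'a set \<Rightarrow> 'a list \<Rightarrow> bool" where
  "core_chain adj rt C vs \<longleftrightarrow>
     length vs \<ge> 2 \<and> set vs \<subseteq> C \<and>
     (\<forall>j. Suc j < length vs \<longrightarrow> adj (vs ! j) (vs ! Suc j)) \<and>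
     distinct (butlast vs) \<and> distinct (tl vs) \<and>
     (length vs = 3 \<longrightarrow> hd vs \<noteq> last vs) \<and>
     (\<forall>j. 0 < j \<and> j < length vs - 1 \<longrightarrow> chain_vertex adj rt C (vs ! j)) \<and>
     \<not> chain_vertex adj rt C (hd vs) \<and> \<not> chain_vertex adj rt C (last vs)"

definition admissible :: "('v, 'e) rbgraph \<Rightarrow> 'e \<Rightarrow> bool" where
  "admissible G e \<longleftrightarrow>
     (\<forall>a b. ginc G e = {a, b} \<longrightarrow>
        (a, b) \<in> {(x, y). \<exists>f\<in>gE G. gcol G f \<noteq> 0 \<and> ginc G f = {x, y}}\<^sup>*)"

end

theory Submission
  imports Defs
begin


definition NR :: "('v,'e) rbgraph \<Rightarrow> ('v \<times> 'v) set" where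
  "NR G = {(x, y). \<exists>f\<in>gE G. gcol G f \<noteq> 0 \<and> ginc G f = {x, y}}"

definition Adm :: "('v,'e) rbgraph \<Rightarrow> 'e \<Rightarrow> bool" where
  "Adm G e \<longleftrightarrow> (blackend G e, whiteend G e) \<in> (NR G)\<^sup>*"

definition sig :: "('v,'e) rbgraph \<Rightarrow> nat \<Rightarrow> 'e \<Rightarrow> 'e" where
  "sig G i e = edge_at G (whiteend G (edge_at G (blackend G e) i)) 0"

lemma sym_NR: "sym (NR G)"
  unfolding NR_def sym_def by (auto simp: insert_commute)

lemma NR_star_sym: "(a,b) \<in> (NR G)\<^sup>* \<Longrightarrow> (b,a) \<in> (NR G)\<^sup>*"
  by (meson sym_NR sym_rtrancl symD)

lemma edge_at_props:
  assumes "in_Gq q G" "v \<in> gV G" "i \<le> q"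
  shows "edge_at G v i \<in> gE G \<and> v \<in> ginc G (edge_at G v i) \<and> gcol G (edge_at G v i) = i"
proof -
  have "\<exists>!e. e \<in> gE G \<and> v \<in> ginc G e \<and> gcol G e = i"
    using assms unfolding in_Gq_def colored_graph_def by blast
  then show ?thesis unfolding edge_at_def by (rule theI')
qed

lemma edge_at_unique:
  assumes "in_Gq q G" "v \<in> gV G" "i \<le> q" "e \<in> gE G" "v \<in> ginc G e" "gcol G e = i"
  shows "edge_at G v i = e"
proof -
  have "\<exists>!e. e \<in> gE G \<and> v \<in> ginc G e \<and> gcol G e = i"
    using assms unfolding in_Gq_def colored_graph_def by blast
  then show ?thesis unfolding edge_at_def using assms(4-6) by (simp add: the1_equality)
qed

lemma ends:
  assumes "in_Gq q G" "e \<in> gE G"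
  shows "ginc G e = {blackend G e, whiteend G e} \<and> blackend G e \<in> gblack G
       \<and> whiteend G e \<notin> gblack G \<and> ginc G e \<subseteq> gV G \<and> gcol G e \<le> q"
proof -
  have c2: "card (ginc G e) = 2" and sub: "ginc G e \<subseteq> gV G" and cq: "gcol G e \<le> q"
    and c1: "card (ginc G e \<inter> gblack G) = 1"
    using assms unfolding in_Gq_def colored_graph_def by auto
  obtain x y where xy: "ginc G e = {x,y}" "x \<noteq> y" using c2 card_2_iff by metis
  have "(x \<in> gblack G \<and> y \<notin> gblack G) \<or> (y \<in> gblack G \<and> x \<notin> gblack G)"
  proof -
    { assume "x \<in> gblack G" "y \<in> gblack G"
      then have "ginc G e \<inter> gblack G = {x,y}" using xy by auto
      then have False using c1 xy by auto }
    moreover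
    { assume "x \<notin> gblack G" "y \<notin> gblack G"
      then have "ginc G e \<inter> gblack G = {}" using xy by auto
      then have False using c1 by auto }
    ultimately show ?thesis by blast
  qed
  then obtain b w where bw: "ginc G e = {b,w}" "b \<in> gblack G" "w \<notin> gblack G"
    using xy by (metis insert_commute)
  have "blackend G e = b" unfolding blackend_def
    by (rule the_equality) (use bw in auto)
  moreover have "whiteend G e = w" unfolding whiteend_def
    by (rule the_equality) (use bw in auto)
  ultimately show ?thesis using bw sub cq by auto
qed

lemma black_unique: "in_Gq q G \<Longrightarrow> e \<in> gE G \<Longrightarrow> x \<in> ginc G e \<Longrightarrow> x \<in> gblack G \<Longrightarrow> x = blackend G e"
  using ends[of q G e] by auto

lemma white_unique: "in_Gq q G \<Longrightarrow> e \<in> gE G \<Longrightarrow> x \<in> ginc G e \<Longrightarrow> x \<notin> gblack G \<Longrightarrow> x = whiteend G e"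
  using ends[of q G e] by auto

lemma sig_props:
  assumes G: "in_Gq q G" and e: "e \<in> zero_edges G" and i: "1 \<le> i" "i \<le> q"
  shows "sig G i e \<in> zero_edges G \<and> (blackend G e, whiteend G (sig G i e)) \<in> NR G
    \<and> whiteend G (sig G i e) = whiteend G (edge_at G (blackend G e) i)
    \<and> blackend G (edge_at G (blackend G e) i) = blackend G e
    \<and> edge_at G (blackend G e) i \<in> gE G \<and> gcol G (edge_at G (blackend G e) i) = i"
proof -
  have eE: "e \<in> gE G" using e unfolding zero_edges_def by auto
  define b where "b = blackend G e"
  have b: "b \<in> gV G" "b \<in> gblack G" using ends[OF G eE] unfolding b_def by auto
  define f where "f = edge_at G b i"
  have f: "f \<in> gE G" "b \<in> ginc G f" "gcol G f = i" using edge_at_props[OF G b(1) i(2)] f_def by auto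
  have bf: "blackend G f = b" using black_unique[OF G f(1) f(2) b(2)] by simp
  define x where "x = whiteend G f"
  have fx: "ginc G f = {b, x}" "x \<in> gV G" "x \<notin> gblack G" using ends[OF G f(1)] bf x_def by auto
  have N: "(b, x) \<in> NR G" unfolding NR_def using f fx i by (auto intro!: bexI[of _ f])
  define e' where "e' = edge_at G x 0"
  have e': "e' \<in> gE G" "x \<in> ginc G e'" "gcol G e' = 0" using edge_at_props[OF G fx(2), of 0] e'_def by auto
  have we': "whiteend G e' = x" using white_unique[OF G e'(1) e'(2) fx(3)] by simp
  have se: "sig G i e = e'" unfolding sig_def e'_def x_def f_def b_def by simp
  show ?thesis using se e' we' N bf f unfolding zero_edges_def b_def f_def x_def by auto
qed

lemma sig_inj:
  assumes G: "in_Gq q G" and i: "1 \<le> i" "i \<le> q"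
  shows "inj_on (sig G i) (zero_edges G)"
proof (rule inj_onI)
  fix e1 e2 assume e1: "e1 \<in> zero_edges G" and e2: "e2 \<in> zero_edges G" and eq: "sig G i e1 = sig G i e2"
  note p1 = sig_props[OF G e1 i] and p2 = sig_props[OF G e2 i]
  define f1 where "f1 = edge_at G (blackend G e1) i"
  define f2 where "f2 = edge_at G (blackend G e2) i"
  have wf: "whiteend G f1 = whiteend G f2" using p1 p2 eq f1_def f2_def by metis
  have f1: "f1 \<in> gE G" "gcol G f1 = i" and f2: "f2 \<in> gE G" "gcol G f2 = i"
    using p1 p2 f1_def f2_def by auto
  have x1: "whiteend G f1 \<in> ginc G f1" "whiteend G f1 \<in> gV G" using ends[OF G f1(1)] by auto
  have x2: "whiteend G f1 \<in> ginc G f2" using ends[OF G f2(1)] wf by auto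
  have "f1 = f2"
    using edge_at_unique[OF G x1(2) i(2) f1(1) x1(1) f1(2)] edge_at_unique[OF G x1(2) i(2) f2(1) x2 f2(2)]
    by simp
  then have bb: "blackend G e1 = blackend G e2" using p1 p2 f1_def f2_def by metis
  have e1E: "e1 \<in> gE G" "gcol G e1 = 0" and e2E: "e2 \<in> gE G" "gcol G e2 = 0"
    using e1 e2 unfolding zero_edges_def by auto
  have b1: "blackend G e1 \<in> ginc G e1" "blackend G e1 \<in> gV G" using ends[OF G e1E(1)] by auto
  have b2: "blackend G e1 \<in> ginc G e2" using ends[OF G e2E(1)] bb by auto
  show "e1 = e2"
    using edge_at_unique[OF G b1(2) _ e1E(1) b1(1) e1E(2)] edge_at_unique[OF G b1(2) _ e2E(1) b2 e2E(2)]
    by simp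
qed

lemma carc_eq: "carc G i = {(e, sig G i e) | e. e \<in> zero_edges G}"
  unfolding carc_def sig_def by simp



lemma funpow_in: "(\<forall>a\<in>A. f a \<in> A) \<Longrightarrow> x \<in> A \<Longrightarrow> (f^^n) x \<in> A"
  by (induction n) auto

lemma funpow_cancel: "(\<forall>a\<in>A. f a \<in> A) \<Longrightarrow> inj_on f A \<Longrightarrow> u \<in> A \<Longrightarrow> v \<in> A \<Longrightarrow> (f^^n) u = (f^^n) v \<Longrightarrow> u = v"
proof (induction n)
  case 0 then show ?case by simp
next
  case (Suc n)
  have "f ((f^^n) u) = f ((f^^n) v)" using Suc.prems by simp
  then have "(f^^n) u = (f^^n) v" using Suc.prems(2) funpow_in[OF Suc.prems(1)] Suc.prems(3,4)
    by (meson inj_onD)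
  then show ?case using Suc by blast
qed

lemma orbit_returns:
  assumes fin: "finite A" and cl: "\<forall>a\<in>A. f a \<in> A" and inj: "inj_on f A" and x: "x \<in> A"
  shows "\<exists>m>0. (f^^m) x = x"
proof -
  have "\<not> inj_on (\<lambda>n. (f^^n) x) {0..card A}"
  proof
    assume "inj_on (\<lambda>n. (f^^n) x) {0..card A}"
    moreover have "(\<lambda>n. (f^^n) x) ` {0..card A} \<subseteq> A" using funpow_in[OF cl x] by auto
    ultimately have "card {0..card A} \<le> card A" using card_inj_on_le fin by blast
    then show False by simp
  qed
  then obtain a b where ab: "a \<noteq> b" "(f^^a) x = (f^^b) x" unfolding inj_on_def by blast
  { fix a b assume ab: "a < b" "(f^^a) x = (f^^b) x"
    have bb: "(f^^b) = (f^^(a + (b-a)))" using ab by simp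
    have "(f^^a) x = (f^^a) ((f^^(b-a)) x)" using ab(2) unfolding bb funpow_add by simp
    then have "x = (f^^(b-a)) x" using funpow_cancel[OF cl inj x funpow_in[OF cl x]] by blast
    then have "\<exists>m>0. (f^^m) x = x" using ab by (intro exI[of _ "b-a"]) auto }
  then show ?thesis using ab by (metis linorder_neqE_nat)
qed

lemma funpow_mult_fix: "(f^^m) x = x \<Longrightarrow> (f^^(m*n)) x = x"
  by (induction n) (auto simp: funpow_add o_def)

lemma carc_reach:
  assumes G: "in_Gq q G" and i: "1 \<le> i" "i \<le> q" and a: "a \<in> zero_edges G"
  shows "(a, (sig G i ^^ n) a) \<in> (carc G i)\<^sup>*"
proof (induction n)
  case 0 then show ?case by simp
next
  case (Suc n)
  have cl: "\<forall>a\<in>zero_edges G. sig G i a \<in> zero_edges G" using sig_props[OF G _ i] by blast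
  have "((sig G i ^^ n) a, sig G i ((sig G i ^^ n) a)) \<in> carc G i"
    unfolding carc_eq using funpow_in[OF cl a] by blast
  then show ?case using Suc by simp
qed

lemma lemmaL:
  assumes G: "in_Gq q G" and i: "1 \<le> i" "i \<le> q" and x: "x \<in> zero_edges G"
    and oth: "\<forall>z\<in>zero_edges G. ccycle G i z = ccycle G i x \<and> z \<noteq> x \<longrightarrow> Adm G z"
  shows "Adm G x"
proof -
  let ?s = "sig G i"
  let ?A = "zero_edges G"
  have fin: "finite ?A" using G unfolding in_Gq_def colored_graph_def zero_edges_def by auto
  have cl: "\<forall>a\<in>?A. ?s a \<in> ?A" using sig_props[OF G _ i] by blast
  obtain m where m: "m > 0" "(?s^^m) x = x" using orbit_returns[OF fin cl sig_inj[OF G i] x] by blast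
  define z where "z n = (?s^^n) x" for n
  have zA: "z n \<in> ?A" for n unfolding z_def using funpow_in[OF cl x] .
  have cyc: "ccycle G i (z n) = ccycle G i x" for n
  proof -
    have r1: "(x, z n) \<in> (carc G i)\<^sup>*" unfolding z_def using carc_reach[OF G i x] .
    have "(?s^^(m*n - n)) (z n) = (?s^^(m*n - n + n)) x" unfolding z_def by (simp add: funpow_add)
    also have "m*n - n + n = m*n" using m(1) by (simp add: le_add_diff_inverse2)
    finally have "(?s^^(m*n - n)) (z n) = x" using funpow_mult_fix[OF m(2)] by simp
    then have r2: "(z n, x) \<in> (carc G i)\<^sup>*" using carc_reach[OF G i zA[of n], of "m*n-n"] by simp
    show ?thesis unfolding ccycle_def using r1 r2 by (auto intro: rtrancl_trans)
  qed
  have step: "(blackend G (z n), whiteend G (z (Suc n))) \<in> NR G" for n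
  proof -
    have "(blackend G (z n), whiteend G (?s (z n))) \<in> NR G" using sig_props[OF G zA[of n] i] by blast
    moreover have "z (Suc n) = ?s (z n)" by (simp add: z_def)
    ultimately show ?thesis by simp
  qed
  have claim: "(\<forall>k. 1 \<le> k \<and> k \<le> n \<longrightarrow> z k \<noteq> x) \<longrightarrow> (blackend G x, blackend G (z n)) \<in> (NR G)\<^sup>*" for n
  proof (induction n)
    case 0 then show ?case by (simp add: z_def)
  next
    case (Suc n)
    show ?case
    proof
      assume h: "\<forall>k. 1 \<le> k \<and> k \<le> Suc n \<longrightarrow> z k \<noteq> x"
      then have ih: "(blackend G x, blackend G (z n)) \<in> (NR G)\<^sup>*" using Suc by auto
      have "z (Suc n) \<noteq> x" using h by simp
      then have "Adm G (z (Suc n))" using oth zA[of "Suc n"] cyc[of "Suc n"] by simp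
      then have "(whiteend G (z (Suc n)), blackend G (z (Suc n))) \<in> (NR G)\<^sup>*"
        unfolding Adm_def by (rule NR_star_sym)
      then show "(blackend G x, blackend G (z (Suc n))) \<in> (NR G)\<^sup>*"
        using ih step[of n] by (meson rtrancl_into_rtrancl rtrancl_trans)
    qed
  qed
  define p where "p = (LEAST p. z (Suc p) = x)"
  have zm: "z (Suc (m - 1)) = x" using m unfolding z_def by simp
  have zp: "z (Suc p) = x" unfolding p_def using zm by (rule LeastI)
  have "\<forall>k. 1 \<le> k \<and> k \<le> p \<longrightarrow> z k \<noteq> x"
  proof (intro allI impI)
    fix k assume k: "1 \<le> k \<and> k \<le> p"
    then obtain k' where k': "k = Suc k'" "k' < p" by (cases k) auto
    show "z k \<noteq> x" using not_less_Least[of k' "\<lambda>p. z (Suc p) = x"] k' unfolding p_def by auto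
  qed
  then have "(blackend G x, blackend G (z p)) \<in> (NR G)\<^sup>*" using claim by blast
  then show ?thesis unfolding Adm_def using step[of p] zp by (metis rtrancl_into_rtrancl)
qed



lemma adj_sym: "const_adj q G x y \<Longrightarrow> const_adj q G y x"
  unfolding const_adj_def by blast

lemma adj_WV_WV: "\<not> const_adj q G (WV a) (WV b)"
  unfolding const_adj_def by auto

lemma adj_WV: "const_adj q G (WV x) u \<longleftrightarrow> x \<in> zero_edges G \<and> (\<exists>i. 1 \<le> i \<and> i \<le> q \<and> u = CV i (ccycle G i x))"
  unfolding const_adj_def by auto

lemma adj_CV_WV: "const_adj q G (CV i S) (WV z) \<longleftrightarrow> z \<in> zero_edges G \<and> 1 \<le> i \<and> i \<le> q \<and> S = ccycle G i z"
  unfolding const_adj_def by auto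

lemma adj_CV_any: "const_adj q G (CV i S) u \<Longrightarrow> \<exists>z. u = WV z"
  unfolding const_adj_def by auto

lemma V_WV: "WV x \<in> const_verts q G \<longleftrightarrow> x \<in> zero_edges G"
  unfolding const_verts_def by auto

lemma V_CV: "CV i (ccycle G i x) \<in> const_verts q G" if "x \<in> zero_edges G" "1 \<le> i" "i \<le> q"
  unfolding const_verts_def using that by blast

lemma nbr_out:
  assumes x: "x \<in> zero_edges G" and c: "card {u\<in>R. const_adj q G (WV x) u} < q"
  shows "\<exists>j. 1 \<le> j \<and> j \<le> q \<and> CV j (ccycle G j x) \<notin> R"
proof (rule ccontr)
  assume "\<not> ?thesis"
  then have sub: "(\<lambda>j. CV j (ccycle G j x)) ` {1..q} \<subseteq> {u\<in>R. const_adj q G (WV x) u}"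
    using x by (auto simp: adj_WV)
  have fin: "finite {u\<in>R. const_adj q G (WV x) u}"
    by (rule finite_subset[of _ "(\<lambda>j. CV j (ccycle G j x)) ` {1..q}"]) (auto simp: adj_WV)
  have inj: "inj_on (\<lambda>j. CV j (ccycle G j x)) {1..q}" by (auto intro: inj_onI)
  have "card ((\<lambda>j. CV j (ccycle G j x)) ` {1..q}) = q" using card_image[OF inj] by simp
  then have "q \<le> card {u\<in>R. const_adj q G (WV x) u}" using card_mono[OF fin sub] by simp
  then show False using c by simp
qed




definition Inv :: "nat \<Rightarrow> ('v,'e) rbgraph \<Rightarrow> 'e cvert set \<Rightarrow> bool" where
  "Inv q G R \<longleftrightarrow> R \<subseteq> const_verts q G \<and> (\<forall>z\<in>zero_edges G. WV z \<notin> R \<longrightarrow> Adm G z) \<and>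
     (\<forall>i S. CV i S \<in> const_verts q G \<and> CV i S \<notin> R \<longrightarrow> (\<forall>z. const_adj q G (CV i S) (WV z) \<longrightarrow> Adm G z))"

lemma Inv_step:
  assumes G: "in_Gq q G" and q: "q \<ge> 2" and st: "(R, R') \<in> prune_step (const_adj q G) (const_root G)"
    and I: "Inv q G R"
  shows "Inv q G R'"
proof -
  have "\<exists>v. R' = R - {v} \<and> v \<in> R \<and> v \<noteq> const_root G \<and> card {u \<in> R. const_adj q G v u} = 1"
    using st unfolding prune_step_def by blast
  then obtain v where v: "R' = R - {v}" "v \<in> R" "v \<noteq> const_root G" "card {u \<in> R. const_adj q G v u} = 1"
    by blast
  note I' = I[unfolded Inv_def]
  have RV: "R \<subseteq> const_verts q G" using I' by (rule conjunct1)
  have I1: "\<forall>z\<in>zero_edges G. WV z \<notin> R \<longrightarrow> Adm G z" using I' by (rule conjunct1[OF conjunct2])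
  have I2: "\<forall>i S. CV i S \<in> const_verts q G \<and> CV i S \<notin> R \<longrightarrow> (\<forall>z. const_adj q G (CV i S) (WV z) \<longrightarrow> Adm G z)"
    using I' by (rule conjunct2[OF conjunct2])
  show ?thesis
  proof (cases v)
    case (WV x)
    have "WV x \<in> const_verts q G" using RV v(2) unfolding WV by (rule subsetD)
    then have x: "x \<in> zero_edges G" by (simp only: V_WV)
    have "card {u \<in> R. const_adj q G (WV x) u} < q" using v(4) q unfolding WV by simp
    then obtain j where j: "1 \<le> j" "j \<le> q" "CV j (ccycle G j x) \<notin> R"
      using nbr_out[OF x, of R] by blast
    have aj: "const_adj q G (CV j (ccycle G j x)) (WV x)" using x j by (simp add: adj_CV_WV)
    have "Adm G x" using I2 V_CV[OF x j(1,2)] j(3) aj by blast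
    have A: "R' \<subseteq> const_verts q G" using RV v(1) by blast
    have B: "\<forall>z\<in>zero_edges G. WV z \<notin> R' \<longrightarrow> Adm G z"
    proof (intro ballI impI)
      fix z assume "z \<in> zero_edges G" "WV z \<notin> R'"
      then show "Adm G z" using I1 \<open>Adm G x\<close> v(1) WV by (cases "z = x") auto
    qed
    have C: "\<forall>i S. CV i S \<in> const_verts q G \<and> CV i S \<notin> R' \<longrightarrow> (\<forall>z. const_adj q G (CV i S) (WV z) \<longrightarrow> Adm G z)"
    proof (intro allI impI)
      fix i S z assume "CV i S \<in> const_verts q G \<and> CV i S \<notin> R'" "const_adj q G (CV i S) (WV z)"
      moreover then have "CV i S \<notin> R" using v(1) WV by auto
      ultimately show "Adm G z" using I2 by blast
    qed
    show ?thesis unfolding Inv_def using A B C by blast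
  next
    case (CV i S)
    have "\<exists>u0. {u \<in> R. const_adj q G v u} = {u0}" using v(4) by (simp add: card_1_singleton_iff)
    then obtain u0 where u0: "{u \<in> R. const_adj q G v u} = {u0}" by blast
    have "\<forall>z. const_adj q G (CV i S) (WV z) \<longrightarrow> Adm G z"
    proof (intro allI impI)
      fix z assume az: "const_adj q G (CV i S) (WV z)"
      then have zz: "z \<in> zero_edges G" "1 \<le> i" "i \<le> q" "S = ccycle G i z" by (simp_all add: adj_CV_WV)
      show "Adm G z"
      proof (cases "WV z \<in> R")
        case False then show ?thesis using I1 zz by blast
      next
        case True
        then have "WV z = u0" using u0 az CV by blast
        show ?thesis
        proof (rule lemmaL[OF G zz(2,3) zz(1)], intro ballI impI)
          fix z' assume z': "z' \<in> zero_edges G" "ccycle G i z' = ccycle G i z \<and> z' \<noteq> z"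
          have a': "const_adj q G (CV i S) (WV z')" using z' zz by (simp add: adj_CV_WV)
          have "WV z' \<notin> R"
          proof
            assume "WV z' \<in> R"
            then have "WV z' = u0" using u0 a' CV by blast
            then show False using \<open>WV z = u0\<close> z' by auto
          qed
          then show "Adm G z'" using I1 z' by blast
        qed
      qed
    qed
    note new = this
    have A: "R' \<subseteq> const_verts q G" using RV v(1) by blast
    have B: "\<forall>z\<in>zero_edges G. WV z \<notin> R' \<longrightarrow> Adm G z"
    proof (intro ballI impI)
      fix z assume "z \<in> zero_edges G" "WV z \<notin> R'"
      moreover then have "WV z \<notin> R" using v(1) CV by auto
      ultimately show "Adm G z" using I1 by blast
    qed
    have C: "\<forall>i' S'. CV i' S' \<in> const_verts q G \<and> CV i' S' \<notin> R' \<longrightarrow> (\<forall>z. const_adj q G (CV i' S') (WV z) \<longrightarrow> Adm G z)"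
    proof (intro allI impI)
      fix i' S' z assume h: "CV i' S' \<in> const_verts q G \<and> CV i' S' \<notin> R'" "const_adj q G (CV i' S') (WV z)"
      show "Adm G z"
      proof (cases "CV i' S' = v")
        case True then show ?thesis using new h(2) CV by simp
      next
        case False
        then have "CV i' S' \<notin> R" using h(1) v(1) by auto
        then show ?thesis using I2 h by blast
      qed
    qed
    show ?thesis unfolding Inv_def using A B C by blast
  qed
qed

lemma Inv_core:
  assumes G: "in_Gq q G" and q: "q \<ge> 2"
    and c: "(const_verts q G, C) \<in> (prune_step (const_adj q G) (const_root G))\<^sup>*"
  shows "Inv q G C"
  using c
proof (induction rule: rtrancl_induct)
  case base
  have "\<forall>z\<in>zero_edges G. WV z \<notin> const_verts q G \<longrightarrow> Adm G z" by (simp add: V_WV)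
  then show ?case unfolding Inv_def by simp
next
  case (step y z) show ?case by (rule Inv_step[OF G q step(2) step(3)])
qed



lemma Adm_admissible: "in_Gq q G \<Longrightarrow> e \<in> gE G \<Longrightarrow> Adm G e \<Longrightarrow> admissible G e"
proof -
  assume G: "in_Gq q G" and eE: "e \<in> gE G" and A: "Adm G e"
  have gi: "ginc G e = {blackend G e, whiteend G e}" using ends[OF G eE] by blast
  have A': "(blackend G e, whiteend G e) \<in> (NR G)\<^sup>*" using A unfolding Adm_def .
  have A'': "(whiteend G e, blackend G e) \<in> (NR G)\<^sup>*" using NR_star_sym[OF A'] .
  show ?thesis unfolding admissible_def
  proof (intro allI impI)
    fix a b assume "ginc G e = {a, b}"
    then have "{a,b} = {blackend G e, whiteend G e}" using gi by simp
    then have "(a = blackend G e \<and> b = whiteend G e) \<or> (a = whiteend G e \<and> b = blackend G e)"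
      by (simp add: doubleton_eq_iff)
    then have "(a,b) \<in> (NR G)\<^sup>*" using A' A'' by blast
    then show "(a, b) \<in> {(x, y). \<exists>f\<in>gE G. gcol G f \<noteq> 0 \<and> ginc G f = {x, y}}\<^sup>*"
      unfolding NR_def .
  qed
qed

theorem mainTheorem9:
  fixes q :: nat and G :: "('v, 'e) rbgraph" and C :: "'e cvert set"
    and e :: 'e and vs :: "'e cvert list"
  assumes "q \<ge> 3"
    and "in_Gq q G"
    and "is_core (const_verts q G) (const_adj q G) (const_root G) C"
    and "WV e \<in> C"
    and "\<not> chain_vertex (const_adj q G) (const_root G) C (WV e)"
    and "core_chain (const_adj q G) (const_root G) C vs"
    and "hd vs = WV e"
    and "\<exists>j f. 0 < j \<and> j < length vs - 1 \<and> vs ! j = WV f"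
  shows "admissible G e"
proof -
  note G = assms(2)
  have q3: "q \<ge> 3" by fact
  have q2: "q \<ge> 2" using q3 by simp
  let ?adj = "const_adj q G" and ?rt = "const_root G"
  have pr: "(const_verts q G, C) \<in> (prune_step ?adj ?rt)\<^sup>*" using assms(3) unfolding is_core_def by blast
  have I: "Inv q G C" by (rule Inv_core[OF G q2 pr])
  note I' = I[unfolded Inv_def]
  have I1: "\<forall>z\<in>zero_edges G. WV z \<notin> C \<longrightarrow> Adm G z" using I' by (rule conjunct1[OF conjunct2])
  have I2: "\<forall>i S. CV i S \<in> const_verts q G \<and> CV i S \<notin> C \<longrightarrow> (\<forall>z. const_adj q G (CV i S) (WV z) \<longrightarrow> Adm G z)"
    using I' by (rule conjunct2[OF conjunct2])
  have cc: "length vs \<ge> 2" "set vs \<subseteq> C" "\<And>j. Suc j < length vs \<Longrightarrow> ?adj (vs ! j) (vs ! Suc j)"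
    "distinct (butlast vs)" "\<And>j. 0 < j \<Longrightarrow> j < length vs - 1 \<Longrightarrow> chain_vertex ?adj ?rt C (vs ! j)"
    using assms(6) unfolding core_chain_def by auto
  obtain j f where jf: "0 < j" "j < length vs - 1" "vs ! j = WV f" using assms(8) by blast
  have ne: "vs \<noteq> []" using cc(1) by auto
  have v0: "vs ! 0 = WV e" using assms(7) hd_conv_nth[OF ne] by simp
  have a01: "?adj (WV e) (vs ! 1)" using cc(3)[of 0] cc(1) v0 by simp
  then obtain i where i: "1 \<le> i" "i \<le> q" "vs ! 1 = CV i (ccycle G i e)" and e0: "e \<in> zero_edges G"
    by (auto simp: adj_WV)
  have "j \<noteq> 1" using jf(3) i(3) by auto
  then have len: "3 < length vs" using jf by linarith
  have a12: "?adj (vs ! 1) (vs ! 2)" using cc(3)[of 1] len by (simp add: numeral_2_eq_2)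
  then obtain y where y2: "vs ! 2 = WV y" using i(3) adj_CV_any by metis
  have y: "y \<in> zero_edges G" "ccycle G i e = ccycle G i y" using a12 i(3) y2 by (simp_all add: adj_CV_WV)
  have ch1: "card {u\<in>C. ?adj (vs ! 1) u} = 2" using cc(5)[of 1] len unfolding chain_vertex_def by simp
  have ch2: "card {u\<in>C. ?adj (WV y) u} = 2" using cc(5)[of 2] len y2 unfolding chain_vertex_def by simp
  have "butlast vs ! 0 \<noteq> butlast vs ! 2" using cc(4) len by (simp add: nth_eq_iff_index_eq)
  then have "vs ! 0 \<noteq> vs ! 2" using len by (simp add: nth_butlast)
  then have ey: "e \<noteq> y" using v0 y2 by simp
  have "card {u\<in>C. ?adj (WV y) u} < q" using ch2 q3 by simp
  from nbr_out[OF y(1) this] obtain j' where j': "1 \<le> j'" "j' \<le> q" "CV j' (ccycle G j' y) \<notin> C"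
    by blast
  have aj: "const_adj q G (CV j' (ccycle G j' y)) (WV y)" using y(1) j' by (simp add: adj_CV_WV)
  have Ay: "Adm G y" using I2 V_CV[OF y(1) j'(1,2)] j'(3) aj by blast
  have inC: "WV e \<in> C" "WV y \<in> C" using assms(4) cc(2) len y2 nth_mem[of 2 vs] by auto
  have nb: "{WV e, WV y} \<subseteq> {u\<in>C. ?adj (vs ! 1) u}"
    using inC a12 y2 adj_sym[OF a01] by auto
  have fin: "finite {u\<in>C. ?adj (vs ! 1) u}" by (rule card_ge_0_finite) (unfold ch1, simp)
  have nbeq: "{u\<in>C. ?adj (vs ! 1) u} = {WV e, WV y}"
  proof (rule ccontr)
    assume "{u\<in>C. ?adj (vs ! 1) u} \<noteq> {WV e, WV y}"
    then obtain u where u: "u \<in> {u\<in>C. ?adj (vs ! 1) u}" "u \<notin> {WV e, WV y}" using nb by blast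
    have "insert u {WV e, WV y} \<subseteq> {u\<in>C. ?adj (vs ! 1) u}" using u nb by blast
    then have "card (insert u {WV e, WV y}) \<le> 2" using card_mono[OF fin] ch1 by metis
    then show False using u ey by simp
  qed
  have "Adm G e"
  proof (rule lemmaL[OF G i(1,2) e0], intro ballI impI)
    fix z assume z: "z \<in> zero_edges G" "ccycle G i z = ccycle G i e \<and> z \<noteq> e"
    show "Adm G z"
    proof (cases "z = y")
      case True then show ?thesis using Ay by simp
    next
      case False
      have "?adj (vs ! 1) (WV z)" using z i by (simp add: adj_CV_WV)
      then have "WV z \<notin> C" using nbeq z False by auto
      then show ?thesis using I1 z by blast
    qed
  qed
  then show ?thesis using Adm_admissible[OF G] e0 unfolding zero_edges_def by blast
qed


end
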